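(* Let $\alpha$ be a unit-speed curve in $\mathbb{R}^3$ with arc length $s$, nonvanishing curvature $\kappa$ and torsion $\tau$. Let $\alpha_T$ be its tangent indicatrix, with arc length $s_T=\int\kappa\,ds$, and let $\beta$ be a Mannheim-direction curve of $\alpha_T$ (an $X$-direction curve of $\alpha_T$ with $N_\beta=B_T$). Then there is a function $\psi(s)$ with $\frac{d\psi}{ds}=\sqrt{\kappa^2+\tau^2}$ such that, at corresponding parameter values, $$\frac{\tau_\beta}{\kappa_\beta}=\tan\psi.$$ Moreover, $$\frac{\kappa_\beta^2}{(\kappa_\beta^2+\tau_\beta^2)^{3/2}}\,\frac{d}{ds_T}\Big(\frac{\tau_\beta}{\kappa_\beta}\Big)=\mp\,\frac{1}{\dfrac{\kappa^2}{(\kappa^2+\tau^2)^{3/2}}\Big(\dfrac{\tau}{\kappa}\Big)'},$$ that is, the two sides agree up to sign. Here $'=d/ds$.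
   Context: Let $\alpha:I\subset\mathbb{R}\to\mathbb{R}^3$ be a unit-speed curve with arc length $s$, curvature $\kappa>0$, torsion $\tau$ and Frenet frame $\{T,N,B\}$. Put $f=\tau/\kappa$ and $\sigma=\frac{\kappa^2}{(\kappa^2+\tau^2)^{3/2}}(\tau/\kappa)'$. The tangent indicatrix of $\alpha$ is the curve $\alpha_T=T$ on the unit sphere. Its arc length is $s_T=\int\kappa\,ds$, so parameters $s$ and $s_T(s)$ correspond. Its Frenet apparatus is $\{T_T,N_T,B_T,\kappa_T,\tau_T\}$, with $\frac{dT_T}{ds_T}=\kappa_TN_T$, $\frac{dN_T}{ds_T}=-\kappa_TT_T+\tau_TB_T$ and $\frac{dB_T}{ds_T}=-\tau_TN_T$. It is known that $\kappa_T=\sqrt{1+f^2}$ and $\tau_T=\sigma\sqrt{1+f^2}$. Let $x,y,z$ be real functions of $s_T$ with $x^2+y^2+z^2=1$, and set $X=xT_T+yN_T+zB_T$. An integral curve $\beta$ of $X$, meaning $d\beta/ds_T=X$, is an $X$-direction curve of $\alpha_T$. It is regarded as a unit-speed Frenet curve with frame $\{T_\beta=X,N_\beta,B_\beta\}$, curvature $\kappa_\beta>0$ and torsion $\tau_\beta$. $\beta$ is a Mannheim-direction curve of $\alpha_T$ if $N_\beta=B_T$. *)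

theory Defs
  imports "HOL-Analysis.Analysis"
begin

definition ratio_fn :: "(real \<Rightarrow> real) \<Rightarrow> (real \<Rightarrow> real) \<Rightarrow> real \<Rightarrow> real" where
  "ratio_fn kap tau s = tau s / kap s"

definition frenet_sigma :: "(real \<Rightarrow> real) \<Rightarrow> (real \<Rightarrow> real) \<Rightarrow> real \<Rightarrow> real" where
  "frenet_sigma kap tau s =
     kap s ^ 2 / (kap s ^ 2 + tau s ^ 2) powr (3/2) * deriv (ratio_fn kap tau) s"

definition frenet_curve ::
  "real set \<Rightarrow> (real \<Rightarrow> real^3) \<Rightarrow> (real \<Rightarrow> real^3) \<Rightarrow> (real \<Rightarrow> real^3) \<Rightarrow> (real \<Rightarrow> real^3)
   \<Rightarrow> (real \<Rightarrow> real) \<Rightarrow> (real \<Rightarrow> real) \<Rightarrow> bool" where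
  "frenet_curve U c Tc Nc Bc k t \<longleftrightarrow>
     (\<forall>u\<in>U.
        (c has_vector_derivative Tc u) (at u) \<and>
        norm (Tc u) = 1 \<and> norm (Nc u) = 1 \<and> Tc u \<bullet> Nc u = 0 \<and>
        Bc u = cross3 (Tc u) (Nc u) \<and>
        k u > 0 \<and>
        (Tc has_vector_derivative (k u *\<^sub>R Nc u)) (at u) \<and>
        (Nc has_vector_derivative (- (k u *\<^sub>R Tc u) + t u *\<^sub>R Bc u)) (at u) \<and>
        (Bc has_vector_derivative (- (t u *\<^sub>R Nc u))) (at u))"

end

theory Submission
  imports Defs
begin


lemma vd_inner:
  fixes f g :: "real \<Rightarrow> real^3"
  assumes "(f has_vector_derivative f') (at u)" "(g has_vector_derivative g') (at u)"
  shows "((\<lambda>v. f v \<bullet> g v) has_real_derivative (f' \<bullet> g u + f u \<bullet> g')) (at u)"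
proof -
  have "((\<lambda>v. f v \<bullet> g v) has_derivative (\<lambda>h. f u \<bullet> (h *\<^sub>R g') + (h *\<^sub>R f') \<bullet> g u)) (at u)"
    using has_derivative_inner[OF assms[unfolded has_vector_derivative_def]] .
  moreover have "(\<lambda>h. f u \<bullet> (h *\<^sub>R g') + (h *\<^sub>R f') \<bullet> g u) = (*) (f' \<bullet> g u + f u \<bullet> g')"
    by (auto simp: fun_eq_iff algebra_simps inner_commute)
  ultimately show ?thesis unfolding has_field_derivative_def by simp
qed

lemma triple: "cross3 (a::real^3) (cross3 b c) = (a \<bullet> c) *\<^sub>R b - (a \<bullet> b) *\<^sub>R c"
  unfolding vec_eq_iff forall_3 inner_vec_def sum_3
  by (simp add: cross_components algebra_simps)

lemma open_image:
  fixes sT kap :: "real \<Rightarrow> real"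
  assumes "open I" "\<And>s. s \<in> I \<Longrightarrow> (sT has_real_derivative kap s) (at s)" "\<And>s. s \<in> I \<Longrightarrow> kap s > 0"
  shows "open (sT ` I)"
  unfolding open_dist
proof (intro ballI)
  fix u assume "u \<in> sT ` I"
  then obtain s where s: "s \<in> I" "u = sT s" by auto
  obtain e where e: "e > 0" "cball s e \<subseteq> I" using assms(1) s(1) open_contains_cball by blast
  have sub0: "{s-e..s+e} \<subseteq> I" using e(2) cball_eq_atLeastAtMost[of s e] by simp
  have der: "\<exists>y. DERIV sT x :> y \<and> y > 0" if "x \<in> {s-e..s+e}" for x
    using assms(2,3) sub0 that by blast
  have c: "continuous_on {s-e..s+e} sT"
  proof (intro continuous_at_imp_continuous_on ballI)
    fix x assume "x \<in> {s-e..s+e}"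
    then obtain y where "DERIV sT x :> y" using der[of x] by blast
    then show "isCont sT x" by (rule DERIV_isCont)
  qed
  have l: "sT (s-e) < sT s"
    by (rule DERIV_pos_imp_increasing) (use e der in \<open>simp_all\<close>)
  have r: "sT s < sT (s+e)"
    by (rule DERIV_pos_imp_increasing) (use e der in \<open>simp_all\<close>)
  have conn: "is_interval (sT ` {s-e..s+e})"
    unfolding is_interval_connected_1 by (rule connected_continuous_image[OF c connected_Icc])
  have ends: "sT (s-e) \<in> sT ` {s-e..s+e}" "sT (s+e) \<in> sT ` {s-e..s+e}" using e(1) by auto
  have sub: "{sT (s-e)..sT (s+e)} \<subseteq> sT ` {s-e..s+e}"
  proof
    fix w assume "w \<in> {sT (s-e)..sT (s+e)}"
    then show "w \<in> sT ` {s-e..s+e}" using mem_is_interval_1_I[OF conn ends] by simp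
  qed
  define d where "d = min (sT s - sT (s-e)) (sT (s+e) - sT s)"
  have "d > 0" using l r by (simp add: d_def)
  moreover have "y \<in> sT ` I" if "dist y u < d" for y
  proof -
    have "y \<in> {sT (s-e)..sT (s+e)}" using that s by (auto simp: d_def dist_real_def)
    then have "y \<in> sT ` {s-e..s+e}" using sub by blast
    then show ?thesis using sub0 by blast
  qed
  ultimately show "\<exists>d>0. \<forall>y. dist y u < d \<longrightarrow> y \<in> sT ` I" by blast
qed

lemma alg3:
  fixes kb tb x y kT tT sg :: real
  assumes "kb > 0" "y \<noteq> 0" "x^2 + y^2 = 1" "tb = kb * x / y" "kb = tT * y" "kT > 0" "tT = sg * kT"
  shows "kb\<^sup>2 / (kb\<^sup>2 + tb\<^sup>2) powr (3/2) * (kT / y^2) = 1 / sg \<or>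
         kb\<^sup>2 / (kb\<^sup>2 + tb\<^sup>2) powr (3/2) * (kT / y^2) = - (1 / sg)"
proof -
  have a: "kb / \<bar>y\<bar> > 0" using assms by simp
  have "kb\<^sup>2 + tb\<^sup>2 = (kb / \<bar>y\<bar>)^2"
  proof -
    have "kb\<^sup>2 + tb\<^sup>2 = kb^2 * (x^2 + y^2) / y^2" using assms(2,4) by (simp add: field_simps power2_eq_square)
    then show ?thesis using assms(3) by (simp add: power_divide)
  qed
  moreover have "((kb / \<bar>y\<bar>)^2) powr (3/2) = (kb / \<bar>y\<bar>)^3"
    using a by (simp add: powr_realpow[symmetric] powr_powr)
  ultimately have P: "(kb\<^sup>2 + tb\<^sup>2) powr (3/2) = (kb / \<bar>y\<bar>)^3" by simp
  have yy: "y^2 = \<bar>y\<bar>^2" by simp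
  have e: "kb\<^sup>2 / (kb\<^sup>2 + tb\<^sup>2) powr (3/2) * (kT / y^2) = \<bar>y\<bar> * kT / kb"
    unfolding P yy using assms(1,2) by (simp add: field_simps power2_eq_square power3_eq_cube)
  have "sg \<noteq> 0" using assms by auto
  show ?thesis
  proof (cases "y > 0")
    case True
    then show ?thesis using e assms \<open>sg \<noteq> 0\<close> by (simp add: field_simps)
  next
    case False
    then have "\<bar>y\<bar> = - y" using assms(2) by simp
    then show ?thesis using e assms \<open>sg \<noteq> 0\<close> by (simp add: field_simps)
  qed
qed

lemma alg2:
  fixes k t :: real assumes "k > 0"
  shows "sqrt (1 + (t / k)\<^sup>2) * k = sqrt (k\<^sup>2 + t\<^sup>2)"
proof -
  have "sqrt (1 + (t / k)\<^sup>2) * k = sqrt (1 + (t / k)\<^sup>2) * sqrt (k^2)" using assms by simp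
  also have "\<dots> = sqrt ((1 + (t / k)\<^sup>2) * k^2)" by (simp add: real_sqrt_mult)
  also have "(1 + (t / k)\<^sup>2) * k^2 = k\<^sup>2 + t\<^sup>2" using assms by (simp add: field_simps power2_eq_square)
  finally show ?thesis .
qed

lemma alg1:
  fixes x y kT :: real assumes "y \<noteq> 0" "x^2+y^2 = 1"
  shows "inverse (1 + (x/y)\<^sup>2) * (kT / y^2 * k) = kT * k"
proof -
  have "1 + (x/y)\<^sup>2 = 1 / y^2" using assms by (simp add: field_simps power2_eq_square)
  then show ?thesis using assms by simp
qed

theorem corollary6p6:
  fixes I :: "real set"
    and alpha T N B :: "real \<Rightarrow> real^3" and kap tau :: "real \<Rightarrow> real"
    and sT :: "real \<Rightarrow> real"
    and alphaT TT NT BT :: "real \<Rightarrow> real^3" and kT tT :: "real \<Rightarrow> real"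
    and x y z :: "real \<Rightarrow> real"
    and beta Nb Bb :: "real \<Rightarrow> real^3" and kb tb :: "real \<Rightarrow> real"
  assumes I: "open I" "is_interval I" "I \<noteq> {}"
    and alpha_frenet: "frenet_curve I alpha T N B kap tau"
    and kap_diff: "\<And>s. s \<in> I \<Longrightarrow> kap differentiable (at s)"
    and tau_diff: "\<And>s. s \<in> I \<Longrightarrow> tau differentiable (at s)"
    and sT_deriv: "\<And>s. s \<in> I \<Longrightarrow> (sT has_real_derivative kap s) (at s)"
    and alphaT_def: "\<And>s. s \<in> I \<Longrightarrow> alphaT (sT s) = T s"
    and alphaT_frenet: "frenet_curve (sT ` I) alphaT TT NT BT kT tT"
    and kT_eq: "\<And>s. s \<in> I \<Longrightarrow> kT (sT s) = sqrt (1 + (ratio_fn kap tau s)\<^sup>2)"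
    and tT_eq: "\<And>s. s \<in> I \<Longrightarrow>
                 tT (sT s) = frenet_sigma kap tau s * sqrt (1 + (ratio_fn kap tau s)\<^sup>2)"
    and xyz_unit: "\<And>u. u \<in> sT ` I \<Longrightarrow> (x u)\<^sup>2 + (y u)\<^sup>2 + (z u)\<^sup>2 = 1"
    and beta_frenet: "frenet_curve (sT ` I) beta
                        (\<lambda>u. x u *\<^sub>R TT u + y u *\<^sub>R NT u + z u *\<^sub>R BT u) Nb Bb kb tb"
    and mannheim: "\<And>u. u \<in> sT ` I \<Longrightarrow> Nb u = BT u"
  shows "\<exists>psi :: real \<Rightarrow> real.
           (\<forall>s\<in>I. (psi has_real_derivative sqrt ((kap s)\<^sup>2 + (tau s)\<^sup>2)) (at s)) \<and>
           (\<forall>s\<in>I. tb (sT s) / kb (sT s) = tan (psi s)) \<and>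
           (\<forall>s\<in>I.
              let lhs = (kb (sT s))\<^sup>2 / ((kb (sT s))\<^sup>2 + (tb (sT s))\<^sup>2) powr (3/2)
                        * deriv (\<lambda>u. tb u / kb u) (sT s)
              in lhs = 1 / frenet_sigma kap tau s \<or> lhs = - (1 / frenet_sigma kap tau s))"
proof -
  define U where "U = sT ` I"
  define Tb where "Tb = (\<lambda>u. x u *\<^sub>R TT u + y u *\<^sub>R NT u + z u *\<^sub>R BT u)"
  have kap_pos: "kap s > 0" if "s \<in> I" for s
    using alpha_frenet that unfolding frenet_curve_def by blast
  have openU: "open U" unfolding U_def
    by (rule open_image[OF I(1) sT_deriv kap_pos]) auto
  have aT: "(TT has_vector_derivative (kT u *\<^sub>R NT u)) (at u)"
     "(NT has_vector_derivative (- (kT u *\<^sub>R TT u) + tT u *\<^sub>R BT u)) (at u)"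
     "(BT has_vector_derivative (- (tT u *\<^sub>R NT u))) (at u)"
     "norm (TT u) = 1" "norm (NT u) = 1" "TT u \<bullet> NT u = 0" "BT u = cross3 (TT u) (NT u)"
     "kT u > 0"
    if "u \<in> U" for u
    using alphaT_frenet that unfolding frenet_curve_def U_def by blast+
  have bT: "(Tb has_vector_derivative (kb u *\<^sub>R Nb u)) (at u)"
     "(Nb has_vector_derivative (- (kb u *\<^sub>R Tb u) + tb u *\<^sub>R Bb u)) (at u)"
     "Tb u \<bullet> Nb u = 0" "Bb u = cross3 (Tb u) (Nb u)" "kb u > 0"
    if "u \<in> U" for u
    using beta_frenet that unfolding frenet_curve_def U_def Tb_def by blast+
  have NbBT: "Nb u = BT u" if "u \<in> U" for u using mannheim that U_def by blast
  have fr: "TT u \<bullet> TT u = 1" "NT u \<bullet> NT u = 1" "NT u \<bullet> TT u = 0" "BT u \<bullet> TT u = 0"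
     "BT u \<bullet> NT u = 0" "BT u \<bullet> BT u = 1" "cross3 (TT u) (BT u) = - NT u"
     "cross3 (NT u) (BT u) = TT u" "TT u \<bullet> BT u = 0" "NT u \<bullet> BT u = 0" "TT u \<bullet> NT u = 0"
    if u: "u \<in> U" for u
  proof -
    note a = aT[OF u]
    show 1: "TT u \<bullet> TT u = 1" "NT u \<bullet> NT u = 1" using a(4,5) by (simp_all add: norm_eq_1)
    show 2: "NT u \<bullet> TT u = 0" "TT u \<bullet> NT u = 0" using a(6) by (simp_all add: inner_commute)
    show 3: "BT u \<bullet> TT u = 0" "BT u \<bullet> NT u = 0" "TT u \<bullet> BT u = 0" "NT u \<bullet> BT u = 0"
      unfolding a(7) by (simp_all add: dot_cross_self inner_commute)
    have "(norm (BT u))\<^sup>2 = 1" using norm_cross_dot[of "TT u" "NT u"] a(4,5,6,7) by simp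
    then show "BT u \<bullet> BT u = 1" by (simp add: power2_norm_eq_inner)
    show "cross3 (TT u) (BT u) = - NT u" "cross3 (NT u) (BT u) = TT u"
      unfolding a(7) triple using 1 2 by simp_all
  qed
  have comps: "Tb u \<bullet> TT u = x u" "Tb u \<bullet> NT u = y u" "Tb u \<bullet> BT u = z u" if u: "u \<in> U" for u
    unfolding Tb_def using fr[OF u] by (simp_all add: inner_add_left)
  have z0: "z u = 0" if u: "u \<in> U" for u
    using bT(3)[OF u] NbBT[OF u] comps(3)[OF u] by simp
  have xy1: "(x u)\<^sup>2 + (y u)\<^sup>2 = 1" if u: "u \<in> U" for u
    using xyz_unit[of u] u z0[OF u] unfolding U_def by simp
  have Bb_eq: "Bb u = y u *\<^sub>R TT u - x u *\<^sub>R NT u" if u: "u \<in> U" for u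
    unfolding bT(4)[OF u] NbBT[OF u] Tb_def
    using fr[OF u] z0[OF u] by (simp add: cross_add_left cross_mult_left)
  have kb_eq: "kb u = tT u * y u" if u: "u \<in> U" for u
  proof -
    have "((\<lambda>v. Tb v \<bullet> BT v) has_real_derivative
           ((kb u *\<^sub>R Nb u) \<bullet> BT u + Tb u \<bullet> (- (tT u *\<^sub>R NT u)))) (at u)"
      by (rule vd_inner[OF bT(1)[OF u] aT(3)[OF u]])
    moreover have "((\<lambda>v. Tb v \<bullet> BT v) has_real_derivative 0) (at u)"
      by (rule has_field_derivative_transform_within_open[OF DERIV_const openU u])
         (simp add: comps z0)
    ultimately have "(kb u *\<^sub>R Nb u) \<bullet> BT u + Tb u \<bullet> (- (tT u *\<^sub>R NT u)) = 0"
      using DERIV_unique by blast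
    then show ?thesis using NbBT[OF u] fr[OF u] comps[OF u] by simp
  qed
  have y_ne: "y u \<noteq> 0" if u: "u \<in> U" for u using bT(5)[OF u] kb_eq[OF u] by auto
  have tb_eq: "tb u = kb u * x u / y u" if u: "u \<in> U" for u
  proof -
    have "(BT has_vector_derivative (- (kb u *\<^sub>R Tb u) + tb u *\<^sub>R Bb u)) (at u)"
      by (rule has_vector_derivative_transform_within_open[OF bT(2)[OF u] openU u]) (simp add: NbBT)
    then have "- (kb u *\<^sub>R Tb u) + tb u *\<^sub>R Bb u = - (tT u *\<^sub>R NT u)"
      using aT(3)[OF u] vector_derivative_unique_at by blast
    then have "(- (kb u *\<^sub>R Tb u) + tb u *\<^sub>R Bb u) \<bullet> TT u = (- (tT u *\<^sub>R NT u)) \<bullet> TT u"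
      by simp
    then have "tb u * y u = kb u * x u"
      using Bb_eq[OF u] fr[OF u] comps[OF u] by (simp add: inner_diff_left)
    then show ?thesis using y_ne[OF u] by (simp add: field_simps)
  qed
  have q_deriv: "((\<lambda>v. tb v / kb v) has_real_derivative kT u / (y u)^2) (at u)"
    if u: "u \<in> U" for u
  proof -
    have dX: "((\<lambda>v. Tb v \<bullet> TT v) has_real_derivative kT u * y u) (at u)"
      using vd_inner[OF bT(1)[OF u] aT(1)[OF u]] NbBT[OF u] fr[OF u] comps[OF u] by simp
    have dY: "((\<lambda>v. Tb v \<bullet> NT v) has_real_derivative - kT u * x u) (at u)"
      using vd_inner[OF bT(1)[OF u] aT(2)[OF u]] NbBT[OF u] fr[OF u] comps[OF u] z0[OF u]
      by (simp add: inner_add_right inner_diff_right)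
    have "((\<lambda>v. (Tb v \<bullet> TT v) / (Tb v \<bullet> NT v)) has_real_derivative
           ((kT u * y u) * (Tb u \<bullet> NT u) - (Tb u \<bullet> TT u) * (- kT u * x u)) / (Tb u \<bullet> NT u * (Tb u \<bullet> NT u))) (at u)"
      by (rule DERIV_divide[OF dX dY]) (simp add: comps[OF u] y_ne[OF u])
    moreover have "((kT u * y u) * (Tb u \<bullet> NT u) - (Tb u \<bullet> TT u) * (- kT u * x u)) / (Tb u \<bullet> NT u * (Tb u \<bullet> NT u))
                   = kT u / (y u)^2"
    proof -
      have "(kT u * y u) * y u - x u * (- kT u * x u) = kT u * ((x u)\<^sup>2 + (y u)\<^sup>2)"
        by (simp add: algebra_simps power2_eq_square)
      then show ?thesis using comps[OF u] xy1[OF u] by (simp add: power2_eq_square)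
    qed
    ultimately have "((\<lambda>v. (Tb v \<bullet> TT v) / (Tb v \<bullet> NT v)) has_real_derivative kT u / (y u)^2) (at u)"
      by simp
    then show ?thesis
      by (rule has_field_derivative_transform_within_open[OF _ openU u])
         (use comps tb_eq y_ne bT(5) in \<open>fastforce simp: field_simps\<close>)
  qed
  define psi where "psi = (\<lambda>s. arctan (tb (sT s) / kb (sT s)))"
  show ?thesis
  proof (intro exI[of _ psi] conjI ballI)
    fix s assume s: "s \<in> I"
    have u: "sT s \<in> U" using s U_def by blast
    have "((\<lambda>s. tb (sT s) / kb (sT s)) has_real_derivative kT (sT s) / (y (sT s))^2 * kap s) (at s)"
      using DERIV_chain2[OF q_deriv[OF u] sT_deriv[OF s]] .
    then have D: "(psi has_real_derivative
        inverse (1 + (tb (sT s) / kb (sT s))\<^sup>2) * (kT (sT s) / (y (sT s))^2 * kap s)) (at s)"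
      unfolding psi_def by (rule DERIV_chain2[OF DERIV_arctan])
    moreover have "tb (sT s) / kb (sT s) = x (sT s) / y (sT s)"
      using tb_eq[OF u] bT(5)[OF u] by simp
    ultimately have "(psi has_real_derivative kT (sT s) * kap s) (at s)"
      using alg1[OF y_ne[OF u] xy1[OF u], of "kT (sT s)" "kap s"] by simp
    then show "(psi has_real_derivative sqrt ((kap s)\<^sup>2 + (tau s)\<^sup>2)) (at s)"
      using kT_eq[OF s] alg2[OF kap_pos[OF s], of "tau s"] by (simp add: ratio_fn_def)
  next
    fix s assume s: "s \<in> I"
    show "tb (sT s) / kb (sT s) = tan (psi s)" unfolding psi_def by (simp add: tan_arctan)
  next
    fix s assume s: "s \<in> I"
    have u: "sT s \<in> U" using s U_def by blast
    have d: "deriv (\<lambda>u. tb u / kb u) (sT s) = kT (sT s) / (y (sT s))^2"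
      by (rule DERIV_imp_deriv[OF q_deriv[OF u]])
    have sg: "tT (sT s) = frenet_sigma kap tau s * kT (sT s)"
      using tT_eq[OF s] kT_eq[OF s] by simp
    note A = alg3[OF bT(5)[OF u] y_ne[OF u] xy1[OF u] tb_eq[OF u] kb_eq[OF u] aT(8)[OF u] sg]
    show "let lhs = (kb (sT s))\<^sup>2 / ((kb (sT s))\<^sup>2 + (tb (sT s))\<^sup>2) powr (3/2)
                        * deriv (\<lambda>u. tb u / kb u) (sT s)
              in lhs = 1 / frenet_sigma kap tau s \<or> lhs = - (1 / frenet_sigma kap tau s)"
      unfolding Let_def d by (rule A)
  qed
qed


end
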